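(* Let $(B,\mathbb{T},\omega)$ be a $C^*$-dynamical system with $B\subset B(H)$ for a Hilbert space $H$, and let $A$ be a maximal (abelian $\mathbb{T}$-invariant $*$-subalgebra) of $B$. Then $\pi_0(A'\cap B)\subset A$.
   Context: A $C^*$-dynamical system $(B,\mathbb{T},\omega)$: $B$ a $C^*$-algebra, $\omega:\mathbb{T}\to\mathrm{Aut}(B)$ a homomorphism with $t\mapsto\omega_t(b)$ norm-continuous for each $b$. A maximal (abelian $\mathbb{T}$-invariant $*$-subalgebra) is a $*$-subalgebra which is abelian, satisfies $\omega_t(A)\subset A$ for all $t$, and is maximal among such. $A'$ denotes the commutant of $A$ in $B(H)$. $\pi_0(b)=\int_{\mathbb{T}}\omega_t(b)\,dt$, with $dt$ normalised Haar measure. *)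

theory Defs
  imports "HOL-Analysis.Analysis"
begin

text \<open>A complex Hilbert space H is modelled as a real Hilbert space (type class
real_inner + complete_space, inner product = real part of the complex inner product)
together with an orthogonal complex structure J (multiplication by i).
B(H) is then the set of bounded real-linear operators commuting with J, i.e. the
bounded complex-linear operators.\<close>

definition complex_structure :: "('h::{real_inner,complete_space} \<Rightarrow>\<^sub>L 'h) \<Rightarrow> bool" where
  "complex_structure J \<longleftrightarrow> J o\<^sub>L J = - id_blinfun \<and> (\<forall>x y. inner (J x) (J y) = inner x y)"

definition BH :: "('h::{real_inner,complete_space} \<Rightarrow>\<^sub>L 'h) \<Rightarrow> ('h \<Rightarrow>\<^sub>L 'h) set" where
  "BH J = {T. T o\<^sub>L J = J o\<^sub>L T}"

definition cscale :: "('h::{real_inner,complete_space} \<Rightarrow>\<^sub>L 'h) \<Rightarrow> complex \<Rightarrow> ('h \<Rightarrow>\<^sub>L 'h) \<Rightarrow> ('h \<Rightarrow>\<^sub>L 'h)" where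
  "cscale J c T = Re c *\<^sub>R T + Im c *\<^sub>R (J o\<^sub>L T)"

definition adj :: "('h::{real_inner,complete_space} \<Rightarrow>\<^sub>L 'h) \<Rightarrow> ('h \<Rightarrow>\<^sub>L 'h)" where
  "adj T = (THE S :: 'h \<Rightarrow>\<^sub>L 'h. \<forall>x y. inner (T x) y = inner x (blinfun_apply S y))"

definition star_subalgebra :: "('h::{real_inner,complete_space} \<Rightarrow>\<^sub>L 'h) \<Rightarrow> ('h \<Rightarrow>\<^sub>L 'h) set \<Rightarrow> bool" where
  "star_subalgebra J S \<longleftrightarrow> S \<subseteq> BH J \<and> 0 \<in> S \<and>
     (\<forall>x\<in>S. \<forall>y\<in>S. x + y \<in> S \<and> x o\<^sub>L y \<in> S) \<and>
     (\<forall>c. \<forall>x\<in>S. cscale J c x \<in> S) \<and> (\<forall>x\<in>S. adj x \<in> S)"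

definition cstar_subalgebra :: "('h::{real_inner,complete_space} \<Rightarrow>\<^sub>L 'h) \<Rightarrow> ('h \<Rightarrow>\<^sub>L 'h) set \<Rightarrow> bool" where
  "cstar_subalgebra J S \<longleftrightarrow> star_subalgebra J S \<and> closed S"

definition star_automorphism :: "('h::{real_inner,complete_space} \<Rightarrow>\<^sub>L 'h) \<Rightarrow> ('h \<Rightarrow>\<^sub>L 'h) set
     \<Rightarrow> (('h \<Rightarrow>\<^sub>L 'h) \<Rightarrow> ('h \<Rightarrow>\<^sub>L 'h)) \<Rightarrow> bool" where
  "star_automorphism J B \<alpha> \<longleftrightarrow> bij_betw \<alpha> B B \<and>
     (\<forall>x\<in>B. \<forall>y\<in>B. \<alpha> (x + y) = \<alpha> x + \<alpha> y \<and> \<alpha> (x o\<^sub>L y) = \<alpha> x o\<^sub>L \<alpha> y) \<and>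
     (\<forall>c. \<forall>x\<in>B. \<alpha> (cscale J c x) = cscale J c (\<alpha> x)) \<and>
     (\<forall>x\<in>B. \<alpha> (adj x) = adj (\<alpha> x))"

text \<open>C*-dynamical system (B, T, \<omega>), with T = R/Z parametrised by real t (period 1):
\<omega> is a homomorphism T \<rightarrow> Aut(B), pointwise norm-continuous.\<close>
definition cstar_dynamical_system :: "('h::{real_inner,complete_space} \<Rightarrow>\<^sub>L 'h) \<Rightarrow> ('h \<Rightarrow>\<^sub>L 'h) set
     \<Rightarrow> (real \<Rightarrow> ('h \<Rightarrow>\<^sub>L 'h) \<Rightarrow> ('h \<Rightarrow>\<^sub>L 'h)) \<Rightarrow> bool" where
  "cstar_dynamical_system J B \<omega> \<longleftrightarrow> cstar_subalgebra J B \<and>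
     (\<forall>t. star_automorphism J B (\<omega> t)) \<and>
     (\<forall>b\<in>B. \<omega> 0 b = b) \<and>
     (\<forall>s t. \<forall>b\<in>B. \<omega> (s + t) b = \<omega> s (\<omega> t b)) \<and>
     (\<forall>t. \<forall>b\<in>B. \<omega> (t + 1) b = \<omega> t b) \<and>
     (\<forall>b\<in>B. continuous_on UNIV (\<lambda>t. \<omega> t b))"

definition abelian_invariant :: "('h::{real_inner,complete_space} \<Rightarrow>\<^sub>L 'h) \<Rightarrow> ('h \<Rightarrow>\<^sub>L 'h) set
     \<Rightarrow> (real \<Rightarrow> ('h \<Rightarrow>\<^sub>L 'h) \<Rightarrow> ('h \<Rightarrow>\<^sub>L 'h)) \<Rightarrow> ('h \<Rightarrow>\<^sub>L 'h) set \<Rightarrow> bool" where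
  "abelian_invariant J B \<omega> A \<longleftrightarrow> star_subalgebra J A \<and> A \<subseteq> B \<and>
     (\<forall>x\<in>A. \<forall>y\<in>A. x o\<^sub>L y = y o\<^sub>L x) \<and> (\<forall>t. \<omega> t ` A \<subseteq> A)"

definition maximal_abelian_invariant :: "('h::{real_inner,complete_space} \<Rightarrow>\<^sub>L 'h) \<Rightarrow> ('h \<Rightarrow>\<^sub>L 'h) set
     \<Rightarrow> (real \<Rightarrow> ('h \<Rightarrow>\<^sub>L 'h) \<Rightarrow> ('h \<Rightarrow>\<^sub>L 'h)) \<Rightarrow> ('h \<Rightarrow>\<^sub>L 'h) set \<Rightarrow> bool" where
  "maximal_abelian_invariant J B \<omega> A \<longleftrightarrow> abelian_invariant J B \<omega> A \<and>
     (\<forall>C. abelian_invariant J B \<omega> C \<and> A \<subseteq> C \<longrightarrow> C = A)"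

definition commutant :: "('h::{real_inner,complete_space} \<Rightarrow>\<^sub>L 'h) \<Rightarrow> ('h \<Rightarrow>\<^sub>L 'h) set \<Rightarrow> ('h \<Rightarrow>\<^sub>L 'h) set" where
  "commutant J A = {T \<in> BH J. \<forall>a\<in>A. T o\<^sub>L a = a o\<^sub>L T}"

text \<open>\<pi>_0(b) = integral over T w.r.t. normalised Haar measure = integral over [0,1].\<close>
definition pi0 :: "(real \<Rightarrow> ('h::{real_inner,complete_space} \<Rightarrow>\<^sub>L 'h) \<Rightarrow> ('h \<Rightarrow>\<^sub>L 'h)) \<Rightarrow> ('h \<Rightarrow>\<^sub>L 'h) \<Rightarrow> ('h \<Rightarrow>\<^sub>L 'h)" where
  "pi0 \<omega> b = integral {0..1} (\<lambda>t. \<omega> t b)"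

end

theory Submission
  imports Defs
begin

instance blinfun :: (real_normed_vector, "{real_normed_vector, complete_space}") banach
proof
  fix X::"nat \<Rightarrow> 'a \<Rightarrow>\<^sub>L 'b"
  assume "Cauchy X"
  {
    fix x::'a
    {
      fix x::'a
      assume "norm x \<le> 1"
      have "Cauchy (\<lambda>n. X n x)"
      proof (rule CauchyI)
        fix e::real
        assume "0 < e"
        from CauchyD[OF \<open>Cauchy X\<close> \<open>0 < e\<close>] obtain M
          where M: "\<And>m n. m \<ge> M \<Longrightarrow> n \<ge> M \<Longrightarrow> norm (X m - X n) < e"
          by auto
        show "\<exists>M. \<forall>m\<ge>M. \<forall>n\<ge>M. norm (X m x - X n x) < e"
        proof (safe intro!: exI[where x=M])
          fix m n
          assume le: "M \<le> m" "M \<le> n"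
          have "norm (X m x - X n x) = norm ((X m - X n) x)"
            by (simp add: blinfun.bilinear_simps)
          also have "\<dots> \<le> norm (X m - X n) * norm x"
             by (rule norm_blinfun)
          also have "\<dots> \<le> norm (X m - X n) * 1"
            using \<open>norm x \<le> 1\<close> norm_ge_zero by (rule mult_left_mono)
          also have "\<dots> = norm (X m - X n)" by simp
          also have "\<dots> < e" using le by fact
          finally show "norm (X m x - X n x) < e" .
        qed
      qed
      hence "convergent (\<lambda>n. X n x)"
        by (metis Cauchy_convergent_iff)
    } note convergent_norm1 = this
    define y where "y = x /\<^sub>R norm x"
    have y: "norm y \<le> 1" and xy: "x = norm x *\<^sub>R y"
      by (simp_all add: y_def inverse_eq_divide)
    have "convergent (\<lambda>n. norm x *\<^sub>R X n y)"
      by (intro bounded_bilinear.convergent[OF bounded_bilinear_scaleR] convergent_const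
        convergent_norm1 y)
    also have "(\<lambda>n. norm x *\<^sub>R X n y) = (\<lambda>n. X n x)"
      by (subst xy) (simp add: blinfun.bilinear_simps)
    finally have "convergent (\<lambda>n. X n x)" .
  }
  then obtain v where v: "\<And>x. (\<lambda>n. X n x) \<longlonglongrightarrow> v x"
    unfolding convergent_def
    by metis

  have "Cauchy (\<lambda>n. norm (X n))"
  proof (rule CauchyI)
    fix e::real
    assume "e > 0"
    from CauchyD[OF \<open>Cauchy X\<close> \<open>0 < e\<close>] obtain M
      where M: "\<And>m n. m \<ge> M \<Longrightarrow> n \<ge> M \<Longrightarrow> norm (X m - X n) < e"
      by auto
    show "\<exists>M. \<forall>m\<ge>M. \<forall>n\<ge>M. norm (norm (X m) - norm (X n)) < e"
    proof (safe intro!: exI[where x=M])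
      fix m n assume mn: "m \<ge> M" "n \<ge> M"
      have "norm (norm (X m) - norm (X n)) \<le> norm (X m - X n)"
        by (metis norm_triangle_ineq3 real_norm_def)
      also have "\<dots> < e" using mn by fact
      finally show "norm (norm (X m) - norm (X n)) < e" .
    qed
  qed
  then obtain K where K: "(\<lambda>n. norm (X n)) \<longlonglongrightarrow> K"
    unfolding Cauchy_convergent_iff convergent_def
    by metis

  have "bounded_linear v"
  proof
    fix x y and r::real
    from tendsto_add[OF v[of x] v [of y]] v[of "x + y", unfolded blinfun.bilinear_simps]
      tendsto_scaleR[OF tendsto_const[of r] v[of x]] v[of "r *\<^sub>R x", unfolded blinfun.bilinear_simps]
    show "v (x + y) = v x + v y" "v (r *\<^sub>R x) = r *\<^sub>R v x"
      by (metis (poly_guards_query) LIMSEQ_unique)+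
    show "\<exists>K. \<forall>x. norm (v x) \<le> norm x * K"
    proof (safe intro!: exI[where x=K])
      fix x
      have "norm (v x) \<le> K * norm x"
        by (rule tendsto_le[OF _ tendsto_mult[OF K tendsto_const] tendsto_norm[OF v]])
          (auto simp: norm_blinfun)
      thus "norm (v x) \<le> norm x * K"
        by (simp add: ac_simps)
    qed
  qed
  hence Bv: "\<And>x. (\<lambda>n. X n x) \<longlonglongrightarrow> Blinfun v x"
    by (auto simp: bounded_linear_Blinfun_apply v)

  have "X \<longlonglongrightarrow> Blinfun v"
  proof (rule LIMSEQ_I)
    fix r::real assume "r > 0"
    define r' where "r' = r / 2"
    have "0 < r'" "r' < r" using \<open>r > 0\<close> by (simp_all add: r'_def)
    from CauchyD[OF \<open>Cauchy X\<close> \<open>r' > 0\<close>]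
    obtain M where M: "\<And>m n. m \<ge> M \<Longrightarrow> n \<ge> M \<Longrightarrow> norm (X m - X n) < r'"
      by metis
    show "\<exists>no. \<forall>n\<ge>no. norm (X n - Blinfun v) < r"
    proof (safe intro!: exI[where x=M])
      fix n assume n: "M \<le> n"
      have "norm (X n - Blinfun v) \<le> r'"
      proof (rule norm_blinfun_bound)
        fix x
        have "eventually (\<lambda>m. m \<ge> M) sequentially"
          by (metis eventually_ge_at_top)
        hence ev_le: "eventually (\<lambda>m. norm (X n x - X m x) \<le> r' * norm x) sequentially"
        proof eventually_elim
          case (elim m)
          have "norm (X n x - X m x) = norm ((X n - X m) x)"
            by (simp add: blinfun.bilinear_simps)
          also have "\<dots> \<le> norm ((X n - X m)) * norm x"
            by (rule norm_blinfun)
          also have "\<dots> \<le> r' * norm x"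
            using M[OF n elim] by (simp add: mult_right_mono)
          finally show ?case .
        qed
        have tendsto_v: "(\<lambda>m. norm (X n x - X m x)) \<longlonglongrightarrow> norm (X n x - Blinfun v x)"
          by (auto intro!: tendsto_intros Bv)
        show "norm ((X n - Blinfun v) x) \<le> r' * norm x"
          by (auto intro!: tendsto_upperbound tendsto_v ev_le simp: blinfun.bilinear_simps)
      qed (simp add: \<open>0 < r'\<close> less_imp_le)
      thus "norm (X n - Blinfun v) < r"
        by (metis \<open>r' < r\<close> le_less_trans)
    qed
  qed
  thus "convergent X"
    by (rule convergentI)
qed



lemma quad_nonpos_zero:
  fixes a b :: real
  assumes h: "\<And>t. a * t + b * t^2 \<le> 0"
  shows "a = 0"
proof (rule ccontr)
  assume a0: "a \<noteq> 0"
  define c where "c = \<bar>b\<bar> + 1"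
  have c0: "c > 0" unfolding c_def by simp
  define t where "t = a / (2 * c)"
  have at: "a * t = a^2 / (2*c)" unfolding t_def by (simp add: power2_eq_square)
  have "\<bar>b * t^2\<bar> = \<bar>b\<bar> * a^2 / (4*c^2)" unfolding t_def by (simp add: power_divide abs_mult power_mult_distrib)
  also have "\<dots> \<le> c * a^2 / (4*c^2)" using c0 unfolding c_def by (intro divide_right_mono mult_right_mono) auto
  also have "\<dots> = a^2 / (4*c)" using c0 by (simp add: power2_eq_square)
  finally have bt: "b * t^2 \<ge> - (a^2 / (4*c))" by linarith
  have "a^2 > 0" using a0 by simp
  then have "a^2/(2*c) - a^2/(4*c) > 0" using c0 by (simp add: field_simps)
  with at bt have "a * t + b * t^2 > 0" by linarith
  with h[of t] show False by linarith
qed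

lemma parallelogram:
  fixes a b :: "'a::real_inner"
  shows "norm (a+b)^2 + norm (a-b)^2 = 2*norm a^2 + 2*norm b^2"
  by (simp add: power2_norm_eq_inner inner_add_left inner_add_right inner_diff_left inner_diff_right inner_commute)

lemma norm_add_scale_sq:
  fixes z y :: "'a::real_inner"
  shows "norm (z + t *\<^sub>R y)^2 = norm z^2 + 2*t*inner z y + t^2 * norm y^2"
  by (simp add: power2_norm_eq_inner inner_add_left inner_add_right inner_commute algebra_simps power2_eq_square[symmetric])

lemma aux_ineq:
  fixes a b c d X E :: real
  assumes "a \<le> c" "b \<le> c" "d = 8 * c" "X \<le> 4*(a+b)" "d < E"
  shows "X < E"
proof -
  have "X \<le> 4*a+4*b" using assms(4) by (simp add: algebra_simps)
  then show ?thesis using assms by linarith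
qed

lemma riesz:
  fixes f :: "'a::{real_inner,complete_space} \<Rightarrow> real"
  assumes bl: "bounded_linear f"
  shows "\<exists>u. \<forall>x. f x = inner u x"
proof (cases "\<forall>x. f x = 0")
  case True then show ?thesis by (intro exI[of _ 0]) simp
next
  case False
  then obtain x0 where x0: "f x0 \<noteq> 0" by auto
  interpret f: bounded_linear f by (rule bl)
  define K where "K = onorm f"
  have bound: "\<And>x. \<bar>f x\<bar> \<le> K * norm x" using onorm[OF bl] K_def by (metis real_norm_def)
  have K0: "K \<ge> 0" unfolding K_def by (rule onorm_pos_le[OF bl])
  have "0 < \<bar>f x0\<bar>" using x0 by simp
  also have "\<dots> \<le> K * norm x0" by (rule bound)
  finally have Kpos: "K > 0" using K0 by (metis mult_eq_0_iff order_less_irrefl order_le_less)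
  have approx: "\<exists>x. norm x = 1 \<and> f x > K - e" if e: "e > 0" for e
  proof (rule ccontr)
    assume "\<not> ?thesis"
    then have H: "\<And>x. norm x = 1 \<Longrightarrow> f x \<le> K - e" by force
    have "norm (f x) \<le> (K - e) * norm x" for x
    proof (cases "x = 0")
      case True then show ?thesis by (simp add: f.zero)
    next
      case False
      define u where "u = x /\<^sub>R norm x"
      have nu: "norm u = 1" "norm (-u) = 1" using False unfolding u_def by auto
      have fu: "f u = f x / norm x" unfolding u_def by (simp add: f.scaleR divide_inverse mult.commute)
      have "f u \<le> K - e" "- f u \<le> K - e" using H[OF nu(1)] H[OF nu(2)] by (auto simp: f.neg)
      then have "\<bar>f x\<bar> / norm x \<le> K - e" using fu by (simp add: abs_le_iff abs_divide)
      then show ?thesis using False by (simp add: field_simps)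
    qed
    note nb = this
    have "x0 \<noteq> 0" using x0 f.zero by auto
    then have "K - e \<ge> 0" using nb[of x0] x0
      by (smt (verit, best) mult_nonpos_nonneg norm_ge_zero zero_less_norm_iff)
    then have "onorm f \<le> K - e" using nb by (intro onorm_bound) auto
    then have "K \<le> K - e" unfolding K_def .
    with e show False by simp
  qed
  have "\<forall>n. \<exists>x. norm x = 1 \<and> f x > K - K / real (Suc n)"
    using approx Kpos by simp
  then obtain x where x: "\<And>n. norm (x n) = 1" "\<And>n. f (x n) > K - K / real (Suc n)"
    by metis
  have key: "norm (x m - x n)^2 \<le> 4 * (1 / real (Suc m) + 1 / real (Suc n))" for m n
  proof -
    define \<delta> where "\<delta> = 1 / real (Suc m) + 1 / real (Suc n)"
    have d0: "\<delta> \<ge> 0" unfolding \<delta>_def by simp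
    have b1: "f (x m + x n) \<le> K * norm (x m + x n)" using bound[of "x m + x n"] by linarith
    have b2: "f (x m + x n) = f (x m) + f (x n)" by (simp add: f.add)
    have b3: "f (x m) + f (x n) > K * (2 - \<delta>)" using x(2)[of m] x(2)[of n] unfolding \<delta>_def by (simp add: algebra_simps)
    have "K * (2 - \<delta>) < K * norm (x m + x n)" using b1 b2 b3 by linarith
    then have "norm (x m + x n) > 2 - \<delta>" using Kpos by (simp add: mult_less_cancel_left_pos)
    have par: "norm (x m + x n)^2 + norm (x m - x n)^2 = 4"
      using parallelogram[of "x m" "x n"] x(1) by simp
    show ?thesis
    proof (cases "\<delta> \<le> 2")
      case True
      then have "(2 - \<delta>)^2 \<le> norm (x m + x n)^2"
        using \<open>norm (x m + x n) > 2 - \<delta>\<close> by (intro power_mono) auto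
      moreover have "0 \<le> \<delta> * \<delta>" using d0 by simp
      moreover have "(2-\<delta>)^2 = 4 - 4*\<delta> + \<delta>^2" by (simp add: power2_eq_square algebra_simps)
      ultimately show ?thesis using par zero_le_power2[of \<delta>] unfolding \<delta>_def[symmetric] by linarith
    next
      case False
      then show ?thesis using par unfolding \<delta>_def[symmetric]
        using zero_le_power2[of "norm (x m + x n)"] by linarith
    qed
  qed
  have "Cauchy x"
  proof (rule metric_CauchyI)
    fix e :: real assume e: "e > 0"
    obtain M :: nat where M: "8 / e^2 < real M" using reals_Archimedean2 by blast
    have e2: "e^2 > 0" using e by simp
    have "8 < real M * e^2" using M pos_divide_less_eq[OF e2] by simp
    then have "8 < e^2 * real (Suc M)" using e2 by (simp add: algebra_simps) (use e2 in linarith)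
    then have "8 / real (Suc M) < e^2" by (simp add: pos_divide_less_eq)
    show "\<exists>M. \<forall>m\<ge>M. \<forall>n\<ge>M. dist (x m) (x n) < e"
    proof (intro exI allI impI)
      fix m n assume mn: "M \<le> m" "M \<le> n"
      have "1 / real (Suc m) \<le> 1 / real (Suc M)" "1 / real (Suc n) \<le> 1 / real (Suc M)"
        using mn by (auto intro!: divide_left_mono)
      moreover have "8 / real (Suc M) = 8 * (1 / real (Suc M))" by simp
      ultimately have "norm (x m - x n)^2 < e^2" using key[of m n] \<open>8 / real (Suc M) < e^2\<close>
        by (metis (no_types, opaque_lifting) aux_ineq)
      then show "dist (x m) (x n) < e" using e by (simp add: dist_norm power_less_imp_less_base)
    qed
  qed
  then obtain z where z: "x \<longlonglongrightarrow> z" using Cauchy_convergent_iff convergent_def by blast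
  have "(\<lambda>n. norm (x n)) \<longlonglongrightarrow> norm z" by (rule tendsto_norm[OF z])
  then have nz: "norm z = 1" using x(1) by (simp add: LIMSEQ_const_iff)
  have fz1: "f z \<le> K" using bound[of z] nz by simp
  have lim1: "(\<lambda>n. f (x n)) \<longlonglongrightarrow> f z" by (rule f.tendsto[OF z])
  have lim2: "(\<lambda>n. K - K / real (Suc n)) \<longlonglongrightarrow> K - 0"
    by (intro tendsto_intros LIMSEQ_Suc[OF lim_const_over_n])
  have "K - 0 \<le> f z" by (rule LIMSEQ_le[OF lim2 lim1]) (use x(2) less_imp_le in blast)
  with fz1 have fz: "f z = K" by simp
  show ?thesis
  proof (intro exI allI)
    fix y
    have "(2*(K * f y - K^2 * inner z y)) * t + ((f y)^2 - K^2 * norm y ^2) * t^2 \<le> 0" for t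
    proof -
      have "\<bar>f (z + t *\<^sub>R y)\<bar> \<le> K * norm (z + t *\<^sub>R y)" by (rule bound)
      then have "(f (z + t *\<^sub>R y))^2 \<le> (K * norm (z + t *\<^sub>R y))^2"
        by (metis abs_ge_zero abs_le_square_iff abs_mult abs_norm_cancel abs_of_nonneg K0)
      also have "f (z + t *\<^sub>R y) = K + t * f y" using fz by (simp add: f.add f.scaleR)
      also have "(K * norm (z + t *\<^sub>R y))^2 = K^2 * (1 + 2*t*inner z y + t^2 * norm y^2)"
        using norm_add_scale_sq[of z t y] nz by (simp add: power_mult_distrib)
      finally show ?thesis by (simp add: power2_eq_square algebra_simps)
    qed
    then have "2*(K * f y - K^2 * inner z y) = 0" by (rule quad_nonpos_zero)
    then have "f y = K * inner z y" using Kpos by (simp add: power2_eq_square)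
    then show "f y = inner (K *\<^sub>R z) y" by simp
  qed
qed

lemma inner_eq_all_imp_eq:
  fixes a b :: "'a::real_inner"
  assumes "\<And>x. inner x a = inner x b"
  shows "a = b"
proof -
  have "inner (a - b) (a - b) = 0" using assms[of "a - b"] by (simp add: inner_diff_right)
  then show ?thesis by simp
qed

lemma blinfun_eq_inner:
  fixes S S' :: "'a::real_inner \<Rightarrow>\<^sub>L 'b::real_inner"
  assumes "\<And>x y. inner x (S y) = inner x (S' y)"
  shows "S = S'"
proof (rule blinfun_eqI)
  fix i show "S i = S' i" by (rule inner_eq_all_imp_eq) (rule assms)
qed

lemma adj_exists:
  fixes T :: "'h::{real_inner,complete_space} \<Rightarrow>\<^sub>L 'h"
  shows "\<exists>S::'h \<Rightarrow>\<^sub>L 'h. \<forall>x y. inner (T x) y = inner x (S y)"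
proof -
  have "\<forall>y. \<exists>u. \<forall>x. inner (T x) y = inner u x"
  proof
    fix y
    have "bounded_linear (\<lambda>x. inner (T x) y)"
      using bounded_linear_compose[OF bounded_linear_inner_left[of y] blinfun.bounded_linear_right[of T]] by (simp add: o_def)
    then show "\<exists>u. \<forall>x. inner (T x) y = inner u x" by (rule riesz)
  qed
  from choice[OF this] obtain S0 where S0a: "\<forall>y x. inner (T x) y = inner (S0 y) x" by blast
  then have S0: "\<And>x y. inner (T x) y = inner (S0 y) x" by blast
  have S0': "inner (T x) y = inner x (S0 y)" for x y using S0[of x y] by (simp only: inner_commute[of "S0 y" x])
  have add: "S0 (a + b) = S0 a + S0 b" for a b
    by (rule inner_eq_all_imp_eq) (simp add: S0'[symmetric] inner_add_right)
  have scl: "S0 (r *\<^sub>R a) = r *\<^sub>R S0 a" for r a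
    by (rule inner_eq_all_imp_eq) (simp add: S0'[symmetric])
  have bnd: "norm (S0 y) \<le> norm y * norm T" for y
  proof (cases "S0 y = 0")
    case True then show ?thesis by simp
  next
    case False
    have "norm (S0 y)^2 = inner (T (S0 y)) y" by (simp add: S0' power2_norm_eq_inner)
    also have "\<dots> \<le> norm (T (S0 y)) * norm y" by (rule norm_cauchy_schwarz)
    also have "\<dots> \<le> norm T * norm (S0 y) * norm y" by (intro mult_right_mono norm_blinfun) auto
    finally have "norm (S0 y) * norm (S0 y) \<le> (norm y * norm T) * norm (S0 y)"
      by (simp add: power2_eq_square algebra_simps)
    then show ?thesis using False by simp
  qed
  have bl: "bounded_linear S0" by (rule bounded_linear_intro[OF add scl bnd])
  show ?thesis
    by (intro exI[of _ "Blinfun S0"]) (simp add: bounded_linear_Blinfun_apply[OF bl] S0')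
qed

lemma adj_char:
  fixes T :: "'h::{real_inner,complete_space} \<Rightarrow>\<^sub>L 'h"
  shows "inner (T x) y = inner x (adj T y)"
proof -
  have ex1: "\<exists>!S::'h \<Rightarrow>\<^sub>L 'h. \<forall>x y. inner (T x) y = inner x (S y)"
  proof (rule ex_ex1I)
    show "\<exists>S::'h \<Rightarrow>\<^sub>L 'h. \<forall>x y. inner (T x) y = inner x (S y)" by (rule adj_exists)
  next
    fix S S' :: "'h \<Rightarrow>\<^sub>L 'h"
    assume A1: "\<forall>x y. inner (T x) y = inner x (S y)" and A2: "\<forall>x y. inner (T x) y = inner x (S' y)"
    have "inner x (S y) = inner x (S' y)" for x y
      using A1 A2 by metis
    then show "S = S'" by (rule blinfun_eq_inner)
  qed
  have "\<forall>x y. inner (T x) y = inner x (adj T y)" unfolding adj_def by (rule theI'[OF ex1])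
  then show ?thesis by blast
qed

lemma adj_char': "inner (adj T y) x = inner y (T x)"
  using adj_char[of T x y] by (simp only: inner_commute[of "adj T y" x] inner_commute[of y "T x"])

lemma adj_unique:
  fixes T S :: "'h::{real_inner,complete_space} \<Rightarrow>\<^sub>L 'h"
  assumes "\<And>x y. inner (T x) y = inner x (S y)"
  shows "adj T = S"
  by (rule blinfun_eq_inner) (simp add: adj_char[of T, symmetric] assms)

lemma adj_adj: "adj (adj T) = T"
  by (rule adj_unique) (simp add: adj_char')

lemma adj_compose: "adj (S o\<^sub>L T) = adj T o\<^sub>L adj S"
  by (rule adj_unique) (simp add: adj_char[of S] adj_char[of T])

lemma adj_add: "adj (S + T) = adj S + adj T"
  by (rule adj_unique) (simp add: adj_char[of S] adj_char[of T] blinfun.add_left inner_add_left inner_add_right)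

lemma adj_scaleR: "adj (r *\<^sub>R T) = r *\<^sub>R adj T"
  by (rule adj_unique) (simp add: adj_char[of T] blinfun.scaleR_left)

lemma adj_minus: "adj (S - T) = adj S - adj T"
  by (rule adj_unique) (simp add: adj_char[of S] adj_char[of T] blinfun.diff_left inner_diff_left inner_diff_right)

lemma adj_zero: "adj 0 = 0"
  by (rule adj_unique) simp

lemma norm_adj_le: "norm (adj T) \<le> norm T"
proof (rule norm_blinfun_bound)
  show "0 \<le> norm T" by simp
  fix y
  show "norm (adj T y) \<le> norm T * norm y"
  proof (cases "adj T y = 0")
    case True then show ?thesis by simp
  next
    case False
    have "norm (adj T y)^2 = inner (T (adj T y)) y" by (simp add: adj_char power2_norm_eq_inner)
    also have "\<dots> \<le> norm (T (adj T y)) * norm y" by (rule norm_cauchy_schwarz)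
    also have "\<dots> \<le> norm T * norm (adj T y) * norm y" by (intro mult_right_mono norm_blinfun) auto
    finally have "norm (adj T y) * norm (adj T y) \<le> (norm T * norm y) * norm (adj T y)"
      by (simp add: power2_eq_square algebra_simps)
    then show ?thesis using False by simp
  qed
qed

lemma norm_adj: "norm (adj T) = norm T"
  using norm_adj_le[of T] norm_adj_le[of "adj T"] by (simp add: adj_adj)

lemma bounded_linear_adj: "bounded_linear (adj :: ('h::{real_inner,complete_space} \<Rightarrow>\<^sub>L 'h) \<Rightarrow> _)"
  by (rule bounded_linear_intro[where K=1]) (auto simp: adj_add adj_scaleR norm_adj)

lemma norm_sq_le_adj_compose: "norm T ^ 2 \<le> norm (adj T o\<^sub>L T)"
proof -
  have "norm T \<le> sqrt (norm (adj T o\<^sub>L T))"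
  proof (rule norm_blinfun_bound)
    show "0 \<le> sqrt (norm (adj T o\<^sub>L T))" by simp
    fix x
    have "norm (T x)^2 = inner x ((adj T o\<^sub>L T) x)" by (simp add: adj_char[symmetric] power2_norm_eq_inner)
    also have "\<dots> \<le> norm x * norm ((adj T o\<^sub>L T) x)" by (rule norm_cauchy_schwarz)
    also have "\<dots> \<le> norm x * (norm (adj T o\<^sub>L T) * norm x)" by (intro mult_left_mono norm_blinfun) auto
    also have "\<dots> = (sqrt (norm (adj T o\<^sub>L T)) * norm x)^2" by (simp add: power2_eq_square power_mult_distrib)
    finally show "norm (T x) \<le> sqrt (norm (adj T o\<^sub>L T)) * norm x"
      by (rule power2_le_imp_le) simp
  qed
  then have "norm T ^ 2 \<le> (sqrt (norm (adj T o\<^sub>L T)))^2" by (intro power_mono) auto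
  then show ?thesis by simp
qed

lemma cscale_real: "cscale J (complex_of_real r) x = r *\<^sub>R x"
  by (simp add: cscale_def)

context
  fixes J :: "'h::{real_inner,complete_space} \<Rightarrow>\<^sub>L 'h" and B :: "('h \<Rightarrow>\<^sub>L 'h) set"
  assumes ss: "star_subalgebra J B"
begin

lemma ss_zero: "0 \<in> B" using ss unfolding star_subalgebra_def by blast
lemma ss_add: "x \<in> B \<Longrightarrow> y \<in> B \<Longrightarrow> x + y \<in> B" using ss unfolding star_subalgebra_def by blast
lemma ss_comp: "x \<in> B \<Longrightarrow> y \<in> B \<Longrightarrow> x o\<^sub>L y \<in> B" using ss unfolding star_subalgebra_def by blast
lemma ss_cscale: "x \<in> B \<Longrightarrow> cscale J c x \<in> B" using ss unfolding star_subalgebra_def by blast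
lemma ss_adj: "x \<in> B \<Longrightarrow> adj x \<in> B" using ss unfolding star_subalgebra_def by blast
lemma ss_BH: "x \<in> B \<Longrightarrow> x \<in> BH J" using ss unfolding star_subalgebra_def by blast
lemma ss_scaleR: "x \<in> B \<Longrightarrow> r *\<^sub>R x \<in> B" using ss_cscale[of x "complex_of_real r"] by (simp add: cscale_real)
lemma ss_minus: "x \<in> B \<Longrightarrow> y \<in> B \<Longrightarrow> x - y \<in> B"
  using ss_add[OF _ ss_scaleR[of y "-1"], of x] by simp
lemma ss_sum: "(\<And>i. i \<in> I \<Longrightarrow> f i \<in> B) \<Longrightarrow> sum f I \<in> B"
proof (induction I rule: infinite_finite_induct)
  case (infinite A) then show ?case by (simp add: ss_zero)
next
  case empty then show ?case by (simp add: ss_zero)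
next
  case (insert x F) then show ?case by (simp add: ss_add)
qed

lemma ss_subspace: "subspace B"
  unfolding subspace_def using ss_zero ss_add ss_scaleR by blast

lemma neumann_B:
  assumes cl: "closed B" and aB: "a \<in> B" and na: "norm a < 1"
  shows "\<exists>q\<in>B. q = a + (q o\<^sub>L a)"
proof -
  define P where "P n = ((\<lambda>T. T o\<^sub>L a) ^^ n) a" for n
  have PS: "P (Suc n) = P n o\<^sub>L a" for n unfolding P_def by simp
  have P0: "P 0 = a" unfolding P_def by simp
  have Pn: "norm (P n) \<le> norm a ^ Suc n" for n
  proof (induction n)
    case 0 then show ?case by (simp add: P0)
  next
    case (Suc n)
    have "norm (P (Suc n)) \<le> norm (P n) * norm a" unfolding PS by (rule norm_blinfun_compose)
    also have "\<dots> \<le> norm a ^ Suc n * norm a" by (intro mult_right_mono Suc.IH) auto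
    finally show ?case by (simp add: mult.commute)
  qed
  have PB: "P n \<in> B" for n
  proof (induction n)
    case 0 show ?case using aB P0 by simp
  next
    case (Suc n) show ?case unfolding PS by (rule ss_comp[OF Suc.IH aB])
  qed
  have "summable (\<lambda>n. norm a * norm a ^ n)"
    by (rule summable_mult[OF summable_geometric]) (use na in simp)
  then have "summable (\<lambda>n. norm a ^ Suc n)" by simp
  then have sP: "summable P"
    by (rule summable_comparison_test'[where N=0]) (rule Pn)
  define q where "q = suminf P"
  have lim: "(\<lambda>n. \<Sum>i<n. P i) \<longlonglongrightarrow> q" using sP unfolding q_def by (rule summable_LIMSEQ)
  have inB: "(\<Sum>i<n. P i) \<in> B" for n by (auto intro: ss_sum PB)
  have qB: "q \<in> B" by (rule closed_sequentially[OF cl inB lim])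
  have bl: "bounded_linear (\<lambda>x. x o\<^sub>L a)"
    by (rule bounded_bilinear.bounded_linear_left[OF bounded_bilinear_blinfun_compose])
  have "q o\<^sub>L a = (\<Sum>n. P n o\<^sub>L a)" unfolding q_def by (rule bounded_linear.suminf[OF bl sP])
  also have "\<dots> = (\<Sum>n. P (Suc n))" by (simp add: PS)
  also have "\<dots> = q - a" unfolding q_def using suminf_split_head[OF sP] P0 by simp
  finally have "q o\<^sub>L a = q - a" .
  then have "q = a + (q o\<^sub>L a)" by simp
  then show ?thesis using qB by blast
qed

end

lemma blinfun_near_norm:
  fixes T :: "'a::real_normed_vector \<Rightarrow>\<^sub>L 'b::real_normed_vector"
  assumes e: "e > 0" and T: "norm T > 0"
  shows "\<exists>v. norm v = 1 \<and> norm (T v) > norm T - e"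
proof (rule ccontr)
  assume "\<not> ?thesis"
  then have H: "\<And>v. norm v = 1 \<Longrightarrow> norm (T v) \<le> norm T - e" by (meson not_le)
  have nb: "norm (T x) \<le> (norm T - e) * norm x" for x
  proof (cases "x = 0")
    case True then show ?thesis by simp
  next
    case False
    have "norm (T (x /\<^sub>R norm x)) \<le> norm T - e" using H False by simp
    then have "norm (T x) / norm x \<le> norm T - e" using False
      by (simp add: blinfun.scaleR_right divide_inverse mult.commute)
    then show ?thesis using False by (simp add: field_simps)
  qed
  have "T \<noteq> 0" using T by auto
  then obtain x where x: "T x \<noteq> 0" using blinfun_eqI[of T 0] by auto
  have "0 < norm (T x)" using x by simp
  then have "0 < (norm T - e) * norm x" using nb[of x] by linarith
  then have "norm T - e \<ge> 0" by (simp add: zero_less_mult_iff)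
  then have "norm T \<le> norm T - e" using nb by (rule norm_blinfun_bound)
  with e show False by simp
qed

lemma sa_approx:
  fixes z :: "'h::{real_inner,complete_space} \<Rightarrow>\<^sub>L 'h"
  assumes sa: "adj z = z" and s: "norm z > 0" and e: "e > 0" "e \<le> norm z"
  shows "\<exists>v. norm v = 1 \<and> norm ((norm z)^2 *\<^sub>R v - z (z v))^2 \<le> 2 * norm z ^ 3 * e"
proof -
  define s where "s = norm z"
  obtain v where v: "norm v = 1" "norm (z v) > s - e" using blinfun_near_norm[OF e(1) s] unfolding s_def by blast
  define n where "n = norm (z v)"
  have n0: "n \<ge> s - e" "n \<le> s" "n \<ge> 0" using v norm_blinfun[of z v] unfolding n_def s_def by auto
  have i1: "inner v (z (z v)) = n^2"
    using adj_char[of z v "z v"] sa unfolding n_def by (simp add: power2_norm_eq_inner)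
  have i2: "norm (z (z v)) \<le> s * n" using norm_blinfun[of z "z v"] unfolding s_def n_def by simp
  have "norm (s^2 *\<^sub>R v - z (z v))^2 = s^4 - 2 * s^2 * inner v (z (z v)) + norm (z (z v))^2"
    using v(1) power2_norm_eq_inner[of v] by (simp add: power2_norm_eq_inner inner_diff_left inner_diff_right inner_commute
        algebra_simps power2_eq_square[symmetric] power4_eq_xxxx)
  also have "\<dots> \<le> s^4 - 2 * s^2 * n^2 + (s*n)^2"
    using i1 i2 power_mono[OF i2] by simp
  also have "\<dots> = s^2 * ((s - n) * (s + n))" by (simp add: power2_eq_square power4_eq_xxxx algebra_simps)
  also have "\<dots> \<le> s^2 * (e * (2 * s))"
    using n0 s unfolding s_def by (intro mult_left_mono mult_mono) auto
  also have "\<dots> = 2 * s^3 * e" by (simp add: power2_eq_square power3_eq_cube)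
  finally show ?thesis using v(1) unfolding s_def by blast
qed

context
  fixes J :: "'h::{real_inner,complete_space} \<Rightarrow>\<^sub>L 'h" and B :: "('h \<Rightarrow>\<^sub>L 'h) set"
    and \<alpha> :: "('h \<Rightarrow>\<^sub>L 'h) \<Rightarrow> ('h \<Rightarrow>\<^sub>L 'h)"
  assumes ss: "star_subalgebra J B" and aut: "star_automorphism J B \<alpha>"
begin

lemma aut_in: "x \<in> B \<Longrightarrow> \<alpha> x \<in> B"
  using aut unfolding star_automorphism_def by (meson bij_betw_apply)
lemma aut_add: "x \<in> B \<Longrightarrow> y \<in> B \<Longrightarrow> \<alpha> (x + y) = \<alpha> x + \<alpha> y"
  using aut unfolding star_automorphism_def by blast
lemma aut_comp: "x \<in> B \<Longrightarrow> y \<in> B \<Longrightarrow> \<alpha> (x o\<^sub>L y) = \<alpha> x o\<^sub>L \<alpha> y"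
  using aut unfolding star_automorphism_def by blast
lemma aut_cscale: "x \<in> B \<Longrightarrow> \<alpha> (cscale J c x) = cscale J c (\<alpha> x)"
  using aut unfolding star_automorphism_def by blast
lemma aut_adj: "x \<in> B \<Longrightarrow> \<alpha> (adj x) = adj (\<alpha> x)"
  using aut unfolding star_automorphism_def by blast
lemma aut_scaleR: "x \<in> B \<Longrightarrow> \<alpha> (r *\<^sub>R x) = r *\<^sub>R \<alpha> x"
  using aut_cscale[of x "complex_of_real r"] by (simp add: cscale_real)
lemma aut_zero: "\<alpha> 0 = 0"
proof -
  have "\<alpha> (0 + 0) = \<alpha> 0 + \<alpha> 0" by (rule aut_add) (auto intro: ss_zero[OF ss])
  then show ?thesis by simp
qed
lemma aut_minus: "x \<in> B \<Longrightarrow> y \<in> B \<Longrightarrow> \<alpha> (x - y) = \<alpha> x - \<alpha> y"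
proof -
  assume xy: "x \<in> B" "y \<in> B"
  have "\<alpha> ((x - y) + y) = \<alpha> (x - y) + \<alpha> y" by (rule aut_add) (use xy ss_minus[OF ss] in auto)
  then show ?thesis by simp
qed

lemma aut_sa_contr:
  assumes cl: "closed B" and yB: "y \<in> B" and sa: "adj y = y"
  shows "norm (\<alpha> y) \<le> norm y"
proof (rule ccontr)
  assume "\<not> ?thesis"
  then have lt: "norm y < norm (\<alpha> y)" by simp
  define z where "z = \<alpha> y"
  define s where "s = norm z"
  have s0: "s > 0" using lt norm_ge_zero[of y] unfolding s_def z_def by linarith
  have zsa: "adj z = z" unfolding z_def using aut_adj[OF yB] sa by simp
  define \<mu> where "\<mu> = s^2"
  have mu0: "\<mu> > 0" using s0 unfolding \<mu>_def by simp
  define a where "a = (1/\<mu>) *\<^sub>R (y o\<^sub>L y)"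
  have aB: "a \<in> B" unfolding a_def by (intro ss_scaleR[OF ss] ss_comp[OF ss] yB)
  have "norm a = (1/\<mu>) * norm (y o\<^sub>L y)" unfolding a_def using mu0 by simp
  also have "\<dots> \<le> (1/\<mu>) * (norm y * norm y)"
    using mu0 norm_blinfun_compose[of y y] by (intro mult_left_mono) auto
  also have "\<dots> < (1/\<mu>) * (s * s)"
    using mu0 lt unfolding s_def z_def by (intro mult_strict_left_mono mult_strict_mono') auto
  also have "\<dots> = 1" using mu0 s0 unfolding \<mu>_def by (simp add: power2_eq_square)
  finally have na: "norm a < 1" .
  obtain q where qB: "q \<in> B" and q: "q = a + (q o\<^sub>L a)" using neumann_B[OF ss cl aB na] by blast
  define Q where "Q = \<alpha> q"
  define A where "A = \<alpha> a"
  have QA: "Q = A + (Q o\<^sub>L A)"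
  proof -
    have "\<alpha> q = \<alpha> (a + (q o\<^sub>L a))" using q by simp
    also have "\<dots> = \<alpha> a + (\<alpha> q o\<^sub>L \<alpha> a)"
      using aut_add[OF aB ss_comp[OF ss qB aB]] aut_comp[OF qB aB] by simp
    finally show ?thesis unfolding Q_def A_def .
  qed
  have Aeq: "A v = (1/\<mu>) *\<^sub>R z (z v)" for v
    unfolding A_def a_def using aut_scaleR[OF ss_comp[OF ss yB yB]] aut_comp[OF yB yB]
    by (simp add: z_def blinfun.scaleR_left)
  define C where "C = 1 + norm Q"
  have C1: "C \<ge> 1" unfolding C_def by simp
  have inv: "norm v \<le> C * norm (v - A v)" for v
  proof -
    have "Q v = A v + Q (A v)" using arg_cong[OF QA, of "\<lambda>T. blinfun_apply T v"]
      by (simp add: blinfun.add_left)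
    then have "v = (v - A v) + Q (v - A v)" by (simp add: blinfun.diff_right)
    then have "norm v \<le> norm (v - A v) + norm (Q (v - A v))" by (metis norm_triangle_ineq)
    also have "\<dots> \<le> norm (v - A v) + norm Q * norm (v - A v)" using norm_blinfun[of Q] by simp
    finally show ?thesis unfolding C_def by (simp add: algebra_simps)
  qed
  define e where "e = s / (4 * C^2)"
  have e0: "e > 0" unfolding e_def using s0 C1 by simp
  have C4: "1 \<le> 4 * C^2" using one_le_power[OF C1, of 2] by linarith
  have "s / (4 * C^2) \<le> s / 1" by (rule divide_left_mono) (use s0 C4 in auto)
  then have es: "e \<le> s" unfolding e_def by simp
  obtain v where v1: "norm v = 1" and vb: "norm (s^2 *\<^sub>R v - z (z v))^2 \<le> 2 * s^3 * e"
    using sa_approx[OF zsa, of e] s0 e0 es unfolding s_def by auto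
  have "v - A v = (1/\<mu>) *\<^sub>R (\<mu> *\<^sub>R v - z (z v))" using mu0 Aeq[of v] by (simp add: algebra_simps)
  then have "norm (v - A v)^2 = (1/\<mu>)^2 * norm (\<mu> *\<^sub>R v - z (z v))^2"
    using mu0 by (simp add: power_mult_distrib power_divide)
  also have "\<dots> \<le> (1/\<mu>)^2 * (2 * s^3 * e)" using vb unfolding \<mu>_def by (intro mult_left_mono) auto
  also have "\<dots> = 1 / (2 * C^2)" unfolding \<mu>_def e_def using s0 C1
    by (simp add: field_simps power2_eq_square power3_eq_cube power4_eq_xxxx)
  finally have nv: "norm (v - A v)^2 \<le> 1 / (2 * C^2)" .
  have "1 \<le> (C * norm (v - A v))^2" using inv[of v] v1 by (simp add: one_le_power)
  also have "\<dots> = C^2 * norm (v - A v)^2" by (simp add: power_mult_distrib)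
  also have "\<dots> \<le> C^2 * (1 / (2 * C^2))" using nv by (intro mult_left_mono) auto
  also have "\<dots> = 1/2" using C1 by (simp add: field_simps)
  finally show False by simp
qed

lemma aut_contr:
  assumes cl: "closed B" and xB: "x \<in> B"
  shows "norm (\<alpha> x) \<le> norm x"
proof -
  have axB: "adj x o\<^sub>L x \<in> B" by (intro ss_comp[OF ss] ss_adj[OF ss] xB)
  have sa: "adj (adj x o\<^sub>L x) = adj x o\<^sub>L x" by (simp add: adj_compose adj_adj)
  have "norm (\<alpha> x)^2 \<le> norm (adj (\<alpha> x) o\<^sub>L \<alpha> x)" by (rule norm_sq_le_adj_compose)
  also have "adj (\<alpha> x) o\<^sub>L \<alpha> x = \<alpha> (adj x o\<^sub>L x)"
    using aut_comp[OF ss_adj[OF ss xB] xB] aut_adj[OF xB] by simp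
  also have "norm \<dots> \<le> norm (adj x o\<^sub>L x)" by (rule aut_sa_contr[OF cl axB sa])
  also have "\<dots> \<le> norm (adj x) * norm x" by (rule norm_blinfun_compose)
  also have "\<dots> = (norm x)^2" by (simp add: norm_adj power2_eq_square)
  finally show ?thesis by (rule power2_le_imp_le) simp
qed

end

lemma compo_assoc: "(a o\<^sub>L b) o\<^sub>L c = a o\<^sub>L (b o\<^sub>L c)"
  by (rule blinfun_eqI) simp
lemma compo_add_left: "(a + b) o\<^sub>L c = (a o\<^sub>L c) + (b o\<^sub>L c)"
  by (rule blinfun_eqI) (simp add: blinfun.add_left)
lemma compo_add_right: "c o\<^sub>L (a + b) = (c o\<^sub>L a) + (c o\<^sub>L b)"
  by (rule blinfun_eqI) (simp add: blinfun.add_left blinfun.add_right)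
lemma compo_scale_left: "(r *\<^sub>R a) o\<^sub>L c = r *\<^sub>R (a o\<^sub>L c)"
  by (rule blinfun_eqI) (simp add: blinfun.scaleR_left)
lemma compo_scale_right: "c o\<^sub>L (r *\<^sub>R a) = r *\<^sub>R (c o\<^sub>L a)"
  by (rule blinfun_eqI) (simp add: blinfun.scaleR_left blinfun.scaleR_right)

lemma cscale_comp: "cscale J c x o\<^sub>L y = cscale J c (x o\<^sub>L y)"
  unfolding cscale_def by (simp add: compo_add_left compo_scale_left compo_assoc)

lemma comp_cscale: "s \<in> BH J \<Longrightarrow> s o\<^sub>L cscale J c x = cscale J c (s o\<^sub>L x)"
  unfolding cscale_def BH_def
  by (simp add: compo_add_right compo_scale_right compo_assoc[symmetric])

inductive_set gen :: "('h::{real_inner,complete_space} \<Rightarrow>\<^sub>L 'h) \<Rightarrow> ('h \<Rightarrow>\<^sub>L 'h) set \<Rightarrow> ('h \<Rightarrow>\<^sub>L 'h) set"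
  for J S where
  gen_base: "x \<in> S \<Longrightarrow> x \<in> gen J S"
| gen_zero: "0 \<in> gen J S"
| gen_add: "x \<in> gen J S \<Longrightarrow> y \<in> gen J S \<Longrightarrow> x + y \<in> gen J S"
| gen_comp: "x \<in> gen J S \<Longrightarrow> y \<in> gen J S \<Longrightarrow> x o\<^sub>L y \<in> gen J S"
| gen_cscale: "x \<in> gen J S \<Longrightarrow> cscale J c x \<in> gen J S"
| gen_adj: "x \<in> gen J S \<Longrightarrow> adj x \<in> gen J S"

lemma gen_sub:
  assumes ss: "star_subalgebra J B" and SB: "S \<subseteq> B"
  shows "gen J S \<subseteq> B"
proof
  fix x assume "x \<in> gen J S"
  then show "x \<in> B"
    by (induction rule: gen.induct)
      (use SB ss_zero[OF ss] ss_add[OF ss] ss_comp[OF ss] ss_cscale[OF ss] ss_adj[OF ss] in auto)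
qed

lemma gen_ss:
  assumes ss: "star_subalgebra J B" and SB: "S \<subseteq> B"
  shows "star_subalgebra J (gen J S)"
  unfolding star_subalgebra_def
  using gen_sub[OF ss SB] ss_BH[OF ss] by (auto intro: gen.intros)

lemma gen_inv:
  assumes ss: "star_subalgebra J B" and SB: "S \<subseteq> B" and aut: "star_automorphism J B \<alpha>"
    and inv: "\<alpha> ` S \<subseteq> S"
  shows "\<alpha> ` gen J S \<subseteq> gen J S"
proof
  fix y assume "y \<in> \<alpha> ` gen J S"
  then obtain x where x: "x \<in> gen J S" and y: "y = \<alpha> x" by blast
  have "\<alpha> x \<in> gen J S" using x
  proof (induction rule: gen.induct)
    case (gen_base x) then show ?case using inv by (auto intro: gen.intros)
  next
    case gen_zero then show ?case using aut_zero[OF ss aut] by (simp add: gen.intros)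
  next
    case (gen_add x y)
    then have "x \<in> B" "y \<in> B" using gen_sub[OF ss SB] by auto
    then show ?case using gen_add aut_add[OF ss aut] by (simp add: gen.intros)
  next
    case (gen_comp x y)
    then have "x \<in> B" "y \<in> B" using gen_sub[OF ss SB] by auto
    then show ?case using gen_comp aut_comp[OF ss aut] by (simp add: gen.intros)
  next
    case (gen_cscale x c)
    then have "x \<in> B" using gen_sub[OF ss SB] by auto
    then show ?case using gen_cscale aut_cscale[OF ss aut] by (simp add: gen.intros)
  next
    case (gen_adj x)
    then have "x \<in> B" using gen_sub[OF ss SB] by auto
    then show ?case using gen_adj aut_adj[OF ss aut] by (simp add: gen.intros)
  qed
  then show "y \<in> gen J S" using y by simp
qed

lemma gen_comm:
  assumes ss: "star_subalgebra J B" and SB: "S \<subseteq> B" and Sadj: "adj ` S \<subseteq> S"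
    and Scomm: "\<And>x y. x \<in> S \<Longrightarrow> y \<in> S \<Longrightarrow> x o\<^sub>L y = y o\<^sub>L x"
    and u: "u \<in> gen J S" and v: "v \<in> gen J S"
  shows "u o\<^sub>L v = v o\<^sub>L u"
proof -
  have BH: "w \<in> BH J" if "w \<in> gen J S" for w using gen_sub[OF ss SB] ss_BH[OF ss] that by auto
  have step1: "\<forall>s\<in>S. u o\<^sub>L s = s o\<^sub>L u" if "u \<in> gen J S" for u
    using that
  proof (induction rule: gen.induct)
    case (gen_base x) then show ?case using Scomm by blast
  next
    case gen_zero then show ?case by simp
  next
    case (gen_add x y) then show ?case by (simp add: compo_add_left compo_add_right)
  next
    case (gen_comp x y) then show ?case by (simp add: compo_assoc) (metis compo_assoc)
  next
    case (gen_cscale x c)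
    show ?case
    proof
      fix s assume s: "s \<in> S"
      then have "s \<in> BH J" using BH gen.gen_base by blast
      then show "cscale J c x o\<^sub>L s = s o\<^sub>L cscale J c x"
        using gen_cscale.IH s by (simp add: cscale_comp comp_cscale)
    qed
  next
    case (gen_adj x)
    show ?case
    proof
      fix s assume s: "s \<in> S"
      then have as: "adj s \<in> S" using Sadj by blast
      have "adj x o\<^sub>L s = adj (adj s o\<^sub>L x)" by (simp add: adj_compose adj_adj)
      also have "adj s o\<^sub>L x = x o\<^sub>L adj s" using gen_adj.IH as by simp
      also have "adj (x o\<^sub>L adj s) = s o\<^sub>L adj x" by (simp add: adj_compose adj_adj)
      finally show "adj x o\<^sub>L s = s o\<^sub>L adj x" .
    qed
  qed
  have "\<forall>u\<in>gen J S. u o\<^sub>L v = v o\<^sub>L u" using v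
  proof (induction rule: gen.induct)
    case (gen_base x) then show ?case using step1 by blast
  next
    case gen_zero then show ?case by simp
  next
    case (gen_add x y) then show ?case by (simp add: compo_add_left compo_add_right)
  next
    case (gen_comp x y) then show ?case by (metis compo_assoc)
  next
    case (gen_cscale x c)
    show ?case
    proof
      fix u assume u: "u \<in> gen J S"
      then show "u o\<^sub>L cscale J c x = cscale J c x o\<^sub>L u"
        using gen_cscale.IH BH[OF u] by (simp add: cscale_comp comp_cscale)
    qed
  next
    case (gen_adj x)
    show ?case
    proof
      fix u assume u: "u \<in> gen J S"
      then have au: "adj u \<in> gen J S" by (rule gen.gen_adj)
      have "u o\<^sub>L adj x = adj (x o\<^sub>L adj u)" by (simp add: adj_compose adj_adj)
      also have "x o\<^sub>L adj u = adj u o\<^sub>L x" using gen_adj.IH au by simp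
      also have "adj (adj u o\<^sub>L x) = adj x o\<^sub>L u" by (simp add: adj_compose adj_adj)
      finally show "u o\<^sub>L adj x = adj x o\<^sub>L u" .
    qed
  qed
  then show ?thesis using u by blast
qed

lemma riemann_sum_in_subspace:
  fixes f :: "real \<Rightarrow> 'a::real_normed_vector"
  assumes D: "D tagged_division_of {a..b}" and fS: "\<forall>t\<in>{a..b}. f t \<in> S" and sub: "subspace S"
  shows "(\<Sum>(x,k)\<in>D. Henstock_Kurzweil_Integration.content k *\<^sub>R f x) \<in> S"
proof (rule subspace_sum[OF sub])
  fix p assume p: "p \<in> D"
  obtain x k where xk: "p = (x, k)" by (cases p)
  have "x \<in> {a..b}" using tagged_division_ofD(2,3)[OF D, of x k] p xk by blast
  then have "f x \<in> S" using fS by blast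
  then show "(case p of (x, k) \<Rightarrow> Henstock_Kurzweil_Integration.content k *\<^sub>R f x) \<in> S"
    using xk subspace_scale[OF sub] by simp
qed

lemma integral_in_closed_subspace:
  fixes f :: "real \<Rightarrow> 'a::real_normed_vector"
  assumes fi: "(f has_integral I) {a..b}" and fS: "\<forall>t\<in>{a..b}. f t \<in> S"
    and sub: "subspace S" and cl: "closed S"
  shows "I \<in> S"
proof -
  have "\<forall>e>0. \<exists>y\<in>S. dist y I < e"
  proof (intro allI impI)
    fix e :: real assume e: "e > 0"
    obtain \<gamma> where g: "gauge \<gamma>" and gD0: "\<forall>D. D tagged_division_of {a..b} \<and> \<gamma> fine D \<longrightarrow>
          norm ((\<Sum>(x,k)\<in>D. Henstock_Kurzweil_Integration.content k *\<^sub>R f x) - I) < e"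
      using fi[unfolded has_integral_real, rule_format, OF e] by (elim exE conjE)
    have gD: "\<And>D. D tagged_division_of {a..b} \<Longrightarrow> \<gamma> fine D \<Longrightarrow>
          norm ((\<Sum>(x,k)\<in>D. Henstock_Kurzweil_Integration.content k *\<^sub>R f x) - I) < e" using gD0 by blast
    obtain D where D: "D tagged_division_of {a..b}" "\<gamma> fine D"
      using fine_division_exists_real[OF g] by blast
    have "dist (\<Sum>(x,k)\<in>D. Henstock_Kurzweil_Integration.content k *\<^sub>R f x) I < e"
      using gD[OF D] by (simp add: dist_norm)
    then show "\<exists>y\<in>S. dist y I < e"
      using riemann_sum_in_subspace[OF D(1) fS sub] by blast
  qed
  then show ?thesis using closed_approachable[OF cl, of I] by simp
qed

lemma map_sum_subspace:
  assumes sub: "subspace S"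
    and Ladd: "\<And>x y. x \<in> S \<Longrightarrow> y \<in> S \<Longrightarrow> L (x + y) = L x + L y" and L0: "L 0 = 0"
    and fin: "finite A" and hS: "\<forall>i\<in>A. h i \<in> S"
  shows "L (sum h A) = (\<Sum>i\<in>A. L (h i))"
  using fin hS
proof (induction A rule: finite_induct)
  case empty then show ?case using L0 by simp
next
  case (insert x F)
  have "sum h F \<in> S" using insert.prems by (intro subspace_sum[OF sub]) auto
  then show ?case using insert Ladd by simp
qed

lemma integral_map_contr:
  fixes f g :: "real \<Rightarrow> 'a::real_normed_vector"
  assumes fi: "(f has_integral I) {a..b}" and gi: "(g has_integral I') {a..b}"
    and fS: "\<forall>t\<in>{a..b}. f t \<in> S" and gL: "\<forall>t\<in>{a..b}. g t = L (f t)"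
    and sub: "subspace S" and cl: "closed S"
    and Ladd: "\<And>x y. x \<in> S \<Longrightarrow> y \<in> S \<Longrightarrow> L (x + y) = L x + L y"
    and Lscale: "\<And>c x. x \<in> S \<Longrightarrow> L (c *\<^sub>R x) = c *\<^sub>R L x"
    and Lc: "\<And>x. x \<in> S \<Longrightarrow> norm (L x) \<le> norm x"
  shows "I' = L I"
proof -
  have IS: "I \<in> S" by (rule integral_in_closed_subspace[OF fi fS sub cl])
  have L0: "L 0 = 0" using Lscale[of 0 0] subspace_0[OF sub] by simp
  have Lminus: "L (x - y) = L x - L y" if "x \<in> S" "y \<in> S" for x y
  proof -
    have e1: "L (x + (-1) *\<^sub>R y) = L x + L ((-1) *\<^sub>R y)"
      by (rule Ladd[OF that(1) subspace_scale[OF sub that(2)]])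
    have e2: "L ((-1) *\<^sub>R y) = (-1) *\<^sub>R L y" by (rule Lscale[OF that(2)])
    have e3: "x - y = x + (-1) *\<^sub>R y" by simp
    have "L (x - y) = L x + (-1) *\<^sub>R L y" unfolding e3 by (simp only: e1 e2)
    then show ?thesis by simp
  qed
  have small: "norm (I' - L I) < 2 * e" if e: "e > 0" for e
  proof -
    obtain \<gamma>1 where g1: "gauge \<gamma>1" and gD10: "\<forall>D. D tagged_division_of {a..b} \<and> \<gamma>1 fine D \<longrightarrow>
          norm ((\<Sum>(x,k)\<in>D. Henstock_Kurzweil_Integration.content k *\<^sub>R f x) - I) < e"
      using fi[unfolded has_integral_real, rule_format, OF e] by (elim exE conjE)
    have gD1: "\<And>D. D tagged_division_of {a..b} \<Longrightarrow> \<gamma>1 fine D \<Longrightarrow>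
          norm ((\<Sum>(x,k)\<in>D. Henstock_Kurzweil_Integration.content k *\<^sub>R f x) - I) < e" using gD10 by blast
    obtain \<gamma>2 where g2: "gauge \<gamma>2" and gD20: "\<forall>D. D tagged_division_of {a..b} \<and> \<gamma>2 fine D \<longrightarrow>
          norm ((\<Sum>(x,k)\<in>D. Henstock_Kurzweil_Integration.content k *\<^sub>R g x) - I') < e"
      using gi[unfolded has_integral_real, rule_format, OF e] by (elim exE conjE)
    have gD2: "\<And>D. D tagged_division_of {a..b} \<Longrightarrow> \<gamma>2 fine D \<Longrightarrow>
          norm ((\<Sum>(x,k)\<in>D. Henstock_Kurzweil_Integration.content k *\<^sub>R g x) - I') < e" using gD20 by blast
    obtain D where D: "D tagged_division_of {a..b}" "(\<lambda>x. \<gamma>1 x \<inter> \<gamma>2 x) fine D"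
      using fine_division_exists_real[OF gauge_Int[OF g1 g2]] by blast
    have f12: "\<gamma>1 fine D \<and> \<gamma>2 fine D" using D(2) fine_Int by blast
    have f1: "\<gamma>1 fine D" and f2: "\<gamma>2 fine D" using f12 by auto
    define R1 where "R1 = (\<Sum>(x,k)\<in>D. Henstock_Kurzweil_Integration.content k *\<^sub>R f x)"
    define R2 where "R2 = (\<Sum>(x,k)\<in>D. Henstock_Kurzweil_Integration.content k *\<^sub>R g x)"
    have R1S: "R1 \<in> S" unfolding R1_def by (rule riemann_sum_in_subspace[OF D(1) fS sub])
    have finD: "finite D" using D(1) by blast
    have termS: "\<forall>p\<in>D. (case p of (x,k) \<Rightarrow> Henstock_Kurzweil_Integration.content k *\<^sub>R f x) \<in> S"
    proof
      fix p assume p: "p \<in> D"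
      obtain x k where xk: "p = (x, k)" by (cases p)
      have "x \<in> {a..b}" using tagged_division_ofD(2,3)[OF D(1), of x k] p xk by blast
      then show "(case p of (x,k) \<Rightarrow> Henstock_Kurzweil_Integration.content k *\<^sub>R f x) \<in> S" using xk fS subspace_scale[OF sub] by simp
    qed
    have "L R1 = (\<Sum>p\<in>D. L (case p of (x,k) \<Rightarrow> Henstock_Kurzweil_Integration.content k *\<^sub>R f x))"
      unfolding R1_def by (rule map_sum_subspace[OF sub Ladd L0 finD termS])
    also have "\<dots> = R2" unfolding R2_def
    proof (rule sum.cong[OF refl])
      fix p assume p: "p \<in> D"
      obtain x k where xk: "p = (x, k)" by (cases p)
      have "x \<in> {a..b}" using tagged_division_ofD(2,3)[OF D(1), of x k] p xk by blast
      then show "L (case p of (x,k) \<Rightarrow> Henstock_Kurzweil_Integration.content k *\<^sub>R f x) = (case p of (x,k) \<Rightarrow> Henstock_Kurzweil_Integration.content k *\<^sub>R g x)"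
        using xk fS gL Lscale by simp
    qed
    finally have R2L: "R2 = L R1" by simp
    have "norm (I' - L I) \<le> norm (I' - R2) + norm (R2 - L I)" by (rule norm_diff_triangle_le[of _ R2]) simp_all
    also have "norm (I' - R2) = norm (R2 - I')" by (rule norm_minus_commute)
    also have "R2 - L I = L (R1 - I)" using R2L Lminus[OF R1S IS] by simp
    also have "norm (L (R1 - I)) \<le> norm (R1 - I)" by (rule Lc) (rule subspace_diff[OF sub R1S IS])
    finally have "norm (I' - L I) \<le> norm (R2 - I') + norm (R1 - I)" by simp
    moreover have "norm (R2 - I') < e" unfolding R2_def by (rule gD2[OF D(1) f2])
    moreover have "norm (R1 - I) < e" unfolding R1_def by (rule gD1[OF D(1) f1])
    ultimately show ?thesis by linarith
  qed
  have "norm (I' - L I) = 0"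
  proof (rule ccontr)
    assume "norm (I' - L I) \<noteq> 0"
    then have "norm (I' - L I) > 0" by simp
    then have "norm (I' - L I) < 2 * (norm (I' - L I) / 4)" using small[of "norm (I' - L I) / 4"] by simp
    then show False using \<open>norm (I' - L I) > 0\<close> by simp
  qed
  then show ?thesis by simp
qed

lemma periodic_int:
  assumes per: "\<And>t. F (t + 1) = F t"
  shows "F (t + real_of_int n) = F t"
proof (induction n rule: int_induct[where k=0])
  case base then show ?case by simp
next
  case (step1 i) then show ?case using per[of "t + real_of_int i"] by (simp add: add.assoc)
next
  case (step2 i)
  have "F (t + real_of_int (i - 1)) = F (t + real_of_int (i - 1) + 1)" by (rule per[symmetric])
  also have "\<dots> = F (t + real_of_int i)" by (simp add: algebra_simps)
  finally show ?case using step2 by simp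
qed

lemma integral_periodic_shift:
  fixes F :: "real \<Rightarrow> 'a::banach"
  assumes cont: "continuous_on UNIV F" and per: "\<And>t. F (t + 1) = F t"
  shows "integral {0..1} (\<lambda>t. F (s + t)) = integral {0..1} F"
proof -
  have int: "F integrable_on {a..b}" for a b
    by (rule integrable_continuous_real) (rule continuous_on_subset[OF cont], simp)
  have base: "integral {0..1} (\<lambda>t. F (s0 + t)) = integral {0..1} F" if s0: "0 \<le> s0" "s0 \<le> 1" for s0
  proof -
    have "integral {0..1} (\<lambda>t. F (s0 + t)) = integral {0..1} (F \<circ> (+) s0)" by (simp add: o_def)
    also have "\<dots> = integral {0+s0..1+s0} F" by (rule integral_shift_Icc_real)
    also have "\<dots> = integral {s0..1} F + integral {1..s0+1} F"
      using Henstock_Kurzweil_Integration.integral_combine[where a=s0 and c=1 and b="s0+1" and f=F] s0 int by (simp add: add.commute)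
    also have "integral {1..s0+1} F = integral {0+1..s0+1} F" by simp
    also have "\<dots> = integral {0..s0} (F \<circ> (+) 1)" by (rule integral_shift_Icc_real[symmetric])
    also have "(F \<circ> (+) 1) = F" using per by (auto simp: o_def add.commute)
    also have "integral {s0..1} F + integral {0..s0} F = integral {0..1} F"
      using Henstock_Kurzweil_Integration.integral_combine[where a=0 and c=s0 and b=1 and f=F] s0 int by (simp add: add.commute)
    finally show ?thesis .
  qed
  define s0 where "s0 = s - real_of_int \<lfloor>s\<rfloor>"
  have s0: "0 \<le> s0" "s0 \<le> 1" unfolding s0_def by linarith+
  have "(\<lambda>t. F (s + t)) = (\<lambda>t. F (s0 + t))"
  proof
    fix t
    have "F (s0 + t + real_of_int \<lfloor>s\<rfloor>) = F (s0 + t)" by (rule periodic_int[where F=F, OF per])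
    then show "F (s + t) = F (s0 + t)" unfolding s0_def by (simp add: algebra_simps)
  qed
  then show ?thesis using base[OF s0] by simp
qed

theorem proposition2p3:
  fixes J :: "'h::{real_inner,complete_space} \<Rightarrow>\<^sub>L 'h"
    and B A :: "('h \<Rightarrow>\<^sub>L 'h) set"
    and \<omega> :: "real \<Rightarrow> ('h \<Rightarrow>\<^sub>L 'h) \<Rightarrow> ('h \<Rightarrow>\<^sub>L 'h)"
  assumes "complex_structure J"
    and "cstar_dynamical_system J B \<omega>"
    and "maximal_abelian_invariant J B \<omega> A"
  shows "pi0 \<omega> ` (commutant J A \<inter> B) \<subseteq> A"
proof -
  have ssB: "star_subalgebra J B" and clB: "closed B" and aut: "\<And>t. star_automorphism J B (\<omega> t)"
    and w0: "\<And>b. b \<in> B \<Longrightarrow> \<omega> 0 b = b"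
    and wadd: "\<And>s t b. b \<in> B \<Longrightarrow> \<omega> (s + t) b = \<omega> s (\<omega> t b)"
    and wper: "\<And>t b. b \<in> B \<Longrightarrow> \<omega> (t + 1) b = \<omega> t b"
    and wcont: "\<And>b. b \<in> B \<Longrightarrow> continuous_on UNIV (\<lambda>t. \<omega> t b)"
    using assms(2) unfolding cstar_dynamical_system_def cstar_subalgebra_def by auto
  have ssA: "star_subalgebra J A" and AB: "A \<subseteq> B"
    and Acomm: "\<And>x y. x \<in> A \<Longrightarrow> y \<in> A \<Longrightarrow> x o\<^sub>L y = y o\<^sub>L x"
    and Ainv: "\<And>t. \<omega> t ` A \<subseteq> A"
    and maxA: "\<And>C. abelian_invariant J B \<omega> C \<Longrightarrow> A \<subseteq> C \<Longrightarrow> C = A"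
    using assms(3) unfolding maximal_abelian_invariant_def abelian_invariant_def by auto
  have JJ: "J (J w) = - w" for w
  proof -
    have "J o\<^sub>L J = - id_blinfun" using assms(1) unfolding complex_structure_def by blast
    then have "(J o\<^sub>L J) w = (- id_blinfun) w" by simp
    then show ?thesis by (simp add: blinfun.minus_left)
  qed
  have Jorth: "inner (J x) (J y) = inner x y" for x y
    using assms(1) unfolding complex_structure_def by blast
  have adjJ: "adj J = - J"
  proof (rule adj_unique)
    fix x y
    have "inner (J x) y = inner (J (J x)) (J y)" by (rule Jorth[symmetric])
    also have "\<dots> = inner x ((- J) y)" by (simp add: JJ blinfun.minus_left)
    finally show "inner (J x) y = inner x ((- J) y)" .
  qed
  have comm_pt: "x (a v) = a (x v)" if "x o\<^sub>L a = a o\<^sub>L x" for x a :: "'h \<Rightarrow>\<^sub>L 'h" and v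
    using arg_cong[OF that, of "\<lambda>T. blinfun_apply T v"] by simp
  have BHJ: "x (J v) = J (x v)" if "x \<in> B" for x v
    using ss_BH[OF ssB that] unfolding BH_def using comm_pt by blast

  have M1: "x \<in> A" if xB: "x \<in> B" and xc: "x \<in> commutant J A" and xsa: "adj x = x"
    and xinv: "\<And>t. \<omega> t x = x" for x
  proof -
    define S where "S = insert x A"
    have SB: "S \<subseteq> B" unfolding S_def using xB AB by auto
    have Sadj: "adj ` S \<subseteq> S" unfolding S_def using xsa ss_adj[OF ssA] by auto
    have xa: "x o\<^sub>L a = a o\<^sub>L x" if "a \<in> A" for a using xc that unfolding commutant_def by blast
    have Scomm: "y o\<^sub>L z = z o\<^sub>L y" if "y \<in> S" "z \<in> S" for y z
      using that unfolding S_def using xa Acomm by auto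
    have Sinv: "\<omega> t ` S \<subseteq> S" for t unfolding S_def using xinv Ainv by auto
    have "abelian_invariant J B \<omega> (gen J S)"
      unfolding abelian_invariant_def
      using gen_ss[OF ssB SB] gen_sub[OF ssB SB] gen_comm[OF ssB SB Sadj Scomm]
        gen_inv[OF ssB SB aut Sinv] by blast
    moreover have "A \<subseteq> gen J S" unfolding S_def by (auto intro: gen.gen_base)
    ultimately have "gen J S = A" by (rule maxA)
    moreover have "x \<in> gen J S" unfolding S_def by (auto intro: gen.gen_base)
    ultimately show ?thesis by simp
  qed

  have wcomm: "\<omega> t b \<in> commutant J A" if bc: "b \<in> commutant J A" and bB: "b \<in> B" for t b
    unfolding commutant_def
  proof (intro CollectI conjI ballI)
    show "\<omega> t b \<in> BH J" by (rule ss_BH[OF ssB aut_in[OF ssB aut bB]])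
    fix a assume a: "a \<in> A"
    define a' where "a' = \<omega> (-t) a"
    have a'A: "a' \<in> A" unfolding a'_def using Ainv a by blast
    have aB: "a \<in> B" and a'B: "a' \<in> B" using a a'A AB by auto
    have "\<omega> t a' = \<omega> (t + -t) a" unfolding a'_def using wadd[OF aB, of t "-t"] by simp
    also have "\<dots> = a" using w0[OF aB] by simp
    finally have ta: "\<omega> t a' = a" .
    have ba: "b o\<^sub>L a' = a' o\<^sub>L b" using bc a'A unfolding commutant_def by blast
    have "\<omega> t b o\<^sub>L a = \<omega> t b o\<^sub>L \<omega> t a'" using ta by simp
    also have "\<dots> = \<omega> t (b o\<^sub>L a')" using aut_comp[OF ssB aut bB a'B] by simp
    also have "\<dots> = \<omega> t (a' o\<^sub>L b)" using ba by simp
    also have "\<dots> = a o\<^sub>L \<omega> t b" using aut_comp[OF ssB aut a'B bB] ta by simp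
    finally show "\<omega> t b o\<^sub>L a = a o\<^sub>L \<omega> t b" .
  qed

  have adjc: "adj x \<in> commutant J A" if xc: "x \<in> commutant J A" and xB: "x \<in> B" for x
    unfolding commutant_def
  proof (intro CollectI conjI ballI)
    show "adj x \<in> BH J" by (rule ss_BH[OF ssB ss_adj[OF ssB xB]])
    fix a assume a: "a \<in> A"
    have "adj a \<in> A" using ss_adj[OF ssA a] .
    then have xa: "x o\<^sub>L adj a = adj a o\<^sub>L x" using xc unfolding commutant_def by blast
    have "adj x o\<^sub>L a = adj (adj a o\<^sub>L x)" by (simp add: adj_compose adj_adj)
    also have "\<dots> = adj (x o\<^sub>L adj a)" using xa by simp
    also have "\<dots> = a o\<^sub>L adj x" by (simp add: adj_compose adj_adj)
    finally show "adj x o\<^sub>L a = a o\<^sub>L adj x" .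
  qed

  show ?thesis
  proof
    fix y assume "y \<in> pi0 \<omega> ` (commutant J A \<inter> B)"
    then obtain b where bc: "b \<in> commutant J A" and bB: "b \<in> B" and y: "y = pi0 \<omega> b" by blast
    define f where "f = (\<lambda>t. \<omega> t b)"
    define c where "c = integral {0..1} f"
    have yc: "y = c" unfolding y c_def f_def pi0_def ..
    have fcont: "continuous_on UNIV f" unfolding f_def by (rule wcont[OF bB])
    have fint: "f integrable_on {0..1}"
      by (rule integrable_continuous_real) (rule continuous_on_subset[OF fcont], simp)
    have fhi: "(f has_integral c) {0..1}" unfolding c_def using fint by (rule integrable_integral)
    have fB: "\<forall>t\<in>{0..1}. f t \<in> B" unfolding f_def using aut_in[OF ssB aut bB] by blast
    have cB: "c \<in> B" by (rule integral_in_closed_subspace[OF fhi fB ss_subspace[OF ssB] clB])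
    have cc: "c \<in> commutant J A"
      unfolding commutant_def
    proof (intro CollectI conjI ballI)
      show "c \<in> BH J" by (rule ss_BH[OF ssB cB])
      fix a assume a: "a \<in> A"
      have bl1: "bounded_linear (\<lambda>x. x o\<^sub>L a)"
        by (rule bounded_bilinear.bounded_linear_left[OF bounded_bilinear_blinfun_compose])
      have bl2: "bounded_linear (\<lambda>x. a o\<^sub>L x)"
        by (rule bounded_bilinear.bounded_linear_right[OF bounded_bilinear_blinfun_compose])
      have eq: "(\<lambda>x. x o\<^sub>L a) \<circ> f = (\<lambda>x. a o\<^sub>L x) \<circ> f"
      proof
        fix t
        have "f t \<in> commutant J A" unfolding f_def by (rule wcomm[OF bc bB])
        then show "((\<lambda>x. x o\<^sub>L a) \<circ> f) t = ((\<lambda>x. a o\<^sub>L x) \<circ> f) t"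
          using a unfolding commutant_def by auto
      qed
      have "c o\<^sub>L a = integral {0..1} ((\<lambda>x. x o\<^sub>L a) \<circ> f)"
        unfolding c_def by (rule integral_linear[OF fint bl1, symmetric])
      also have "\<dots> = integral {0..1} ((\<lambda>x. a o\<^sub>L x) \<circ> f)" using eq by simp
      also have "\<dots> = a o\<^sub>L c" unfolding c_def by (rule integral_linear[OF fint bl2])
      finally show "c o\<^sub>L a = a o\<^sub>L c" .
    qed
    have cinv: "\<omega> s c = c" for s
    proof -
      define g where "g = (\<lambda>t. f (s + t))"
      have gcont: "continuous_on UNIV g" unfolding g_def
        by (rule continuous_on_compose2[OF fcont]) (auto intro!: continuous_intros)
      have gint: "g integrable_on {0..1}"
        by (rule integrable_continuous_real) (rule continuous_on_subset[OF gcont], simp)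
      have gI: "integral {0..1} g = c" unfolding g_def c_def
        by (rule integral_periodic_shift[OF fcont]) (simp add: f_def wper[OF bB])
      have ghi: "(g has_integral c) {0..1}" using gint gI by (metis integrable_integral)
      have gL: "\<forall>t\<in>{0..1}. g t = \<omega> s (f t)" unfolding g_def f_def using wadd[OF bB] by simp
      have "c = \<omega> s c"
      proof (rule integral_map_contr[OF fhi ghi fB gL ss_subspace[OF ssB] clB])
        show "\<And>x y. x \<in> B \<Longrightarrow> y \<in> B \<Longrightarrow> \<omega> s (x + y) = \<omega> s x + \<omega> s y" by (rule aut_add[OF ssB aut])
        show "\<And>r x. x \<in> B \<Longrightarrow> \<omega> s (r *\<^sub>R x) = r *\<^sub>R \<omega> s x" by (rule aut_scaleR[OF ssB aut])
        show "\<And>x. x \<in> B \<Longrightarrow> norm (\<omega> s x) \<le> norm x" by (rule aut_contr[OF ssB aut clB])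
      qed
      then show ?thesis by simp
    qed
    define d where "d = adj c"
    have dB: "d \<in> B" unfolding d_def by (rule ss_adj[OF ssB cB])
    have dc: "d \<in> commutant J A" unfolding d_def by (rule adjc[OF cc cB])
    have dinv: "\<omega> s d = d" for s unfolding d_def using aut_adj[OF ssB aut cB] cinv by simp
    have ca: "c o\<^sub>L a = a o\<^sub>L c" "d o\<^sub>L a = a o\<^sub>L d" if "a \<in> A" for a
      using cc dc that unfolding commutant_def by blast+
    define h where "h = (1/2) *\<^sub>R (c + d)"
    define k where "k = cscale J \<i> (c - d)"
    have kJ: "k = J o\<^sub>L (c - d)" unfolding k_def cscale_def by simp
    have hB: "h \<in> B" unfolding h_def by (intro ss_scaleR[OF ssB] ss_add[OF ssB] cB dB)
    have kB: "k \<in> B" unfolding k_def by (intro ss_cscale[OF ssB] ss_minus[OF ssB] cB dB)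
    have hinv: "\<omega> s h = h" for s
      unfolding h_def using aut_scaleR[OF ssB aut ss_add[OF ssB cB dB]] aut_add[OF ssB aut cB dB] cinv dinv
      by simp
    have kinv: "\<omega> s k = k" for s
      unfolding k_def using aut_cscale[OF ssB aut ss_minus[OF ssB cB dB]] aut_minus[OF ssB aut cB dB] cinv dinv
      by simp
    have hsa: "adj h = h" unfolding h_def d_def by (simp add: adj_scaleR adj_add adj_adj add.commute)
    have ksa: "adj k = k"
    proof -
      have "adj k = adj (c - d) o\<^sub>L adj J" unfolding kJ by (rule adj_compose)
      also have "\<dots> = (d - c) o\<^sub>L (- J)" unfolding d_def by (simp add: adj_minus adj_adj adjJ)
      also have "\<dots> = k" unfolding kJ
        by (rule blinfun_eqI) (simp add: blinfun.minus_left blinfun.diff_left blinfun.diff_right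
            blinfun.minus_right BHJ[OF cB] BHJ[OF dB])
      finally show ?thesis .
    qed
    have hc: "h \<in> commutant J A" unfolding commutant_def
    proof (intro CollectI conjI ballI)
      show "h \<in> BH J" by (rule ss_BH[OF ssB hB])
      fix a assume a: "a \<in> A"
      show "h o\<^sub>L a = a o\<^sub>L h" unfolding h_def
        by (rule blinfun_eqI) (simp add: blinfun.scaleR_left blinfun.add_left blinfun.add_right
            blinfun.scaleR_right comm_pt[OF ca(1)[OF a]] comm_pt[OF ca(2)[OF a]])
    qed
    have kc: "k \<in> commutant J A" unfolding commutant_def
    proof (intro CollectI conjI ballI)
      show "k \<in> BH J" by (rule ss_BH[OF ssB kB])
      fix a assume a: "a \<in> A"
      have aB: "a \<in> B" using a AB by auto
      show "k o\<^sub>L a = a o\<^sub>L k" unfolding kJ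
        by (rule blinfun_eqI) (simp add: blinfun.diff_left blinfun.diff_right
            comm_pt[OF ca(1)[OF a]] comm_pt[OF ca(2)[OF a]] BHJ[OF aB])
    qed
    have hA: "h \<in> A" by (rule M1[OF hB hc hsa hinv])
    have kA: "k \<in> A" by (rule M1[OF kB kc ksa kinv])
    have "c = h + cscale J (Complex 0 (-1/2)) k"
      unfolding h_def cscale_def kJ
      apply (rule blinfun_eqI)
      apply (simp add: blinfun.scaleR_left blinfun.add_left blinfun.diff_left blinfun.diff_right JJ algebra_simps)
      by (metis field_sum_of_halves scaleR_add_left scaleR_one)
    also have "\<dots> \<in> A" by (intro ss_add[OF ssA] ss_cscale[OF ssA] hA kA)
    finally show "y \<in> A" using yc by simp
  qed
qed

end
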